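(* Let $G=(V,E)$ be a finite undirected graph with $V=\{1,\dots,n\}$. Then $A_H$ is positive definite for every $A\in\mathbb{P}_G$ and every subgraph $H=(V,E')$ of $G$ ($E'\subseteq E$) if and only if $G$ is a union of (vertex-disjoint) trees, i.e. $G$ contains no cycle.
   Context: For a symmetric $n\times n$ real matrix $A=(a_{ij})$ and an undirected graph $K=(V,F)$ on $V=\{1,\dots,n\}$, the thresholded matrix $A_K$ is defined by $(A_K)_{ij}=a_{ij}$ if $i=j$ or $(i,j)\in F$, and $(A_K)_{ij}=0$ otherwise. $\mathbb{P}_G$ denotes the set of symmetric positive definite $n\times n$ real matrices $A$ with $a_{ij}=0$ whenever $i\neq j$ and $(i,j)\notin E$. *)

theory Defs
  imports "HOL-Analysis.Analysis"
begin

text \<open>Vertices are the elements of a finite type 'n (playing the role of {1..n});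
  an undirected simple graph is given by its edge set, each edge a 2-element set of vertices.\<close>

definition undirected_graph :: "'n set set \<Rightarrow> bool" where
  "undirected_graph E \<longleftrightarrow> (\<forall>e\<in>E. \<exists>i j. i \<noteq> j \<and> e = {i, j})"

definition symmetric_matrix :: "real^'n^'n \<Rightarrow> bool" where
  "symmetric_matrix A \<longleftrightarrow> transpose A = A"

definition pos_def :: "real^'n^'n \<Rightarrow> bool" where
  "pos_def A \<longleftrightarrow> symmetric_matrix A \<and> (\<forall>x. x \<noteq> 0 \<longrightarrow> x \<bullet> (A *v x) > 0)"

definition threshold :: "'n set set \<Rightarrow> real^'n^'n \<Rightarrow> real^'n^'n" where
  "threshold F A = (\<chi> i j. if i = j \<or> {i, j} \<in> F then A $ i $ j else 0)"

definition PG :: "'n set set \<Rightarrow> (real^'n^'n) set" where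
  "PG E = {A. pos_def A \<and> (\<forall>i j. i \<noteq> j \<and> {i, j} \<notin> E \<longrightarrow> A $ i $ j = 0)}"

definition is_cycle :: "'n set set \<Rightarrow> 'n list \<Rightarrow> bool" where
  "is_cycle E vs \<longleftrightarrow> length vs \<ge> 3 \<and> distinct vs \<and>
     (\<forall>k < length vs. {vs ! k, vs ! ((k + 1) mod length vs)} \<in> E)"

definition has_cycle :: "'n set set \<Rightarrow> bool" where
  "has_cycle E \<longleftrightarrow> (\<exists>vs. is_cycle E vs)"

end

theory Submission imports Defs "HOL-Library.Transitive_Closure_Table"
begin

definition qf :: "real^'n^'n \<Rightarrow> real^'n \<Rightarrow> real" where
  "qf M x = (\<Sum>i\<in>UNIV. \<Sum>j\<in>UNIV. x$i * M$i$j * x$j)"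

lemma quad_qf: "x \<bullet> (M *v x) = qf M (x::real^'n::finite)"
  unfolding qf_def inner_vec_def matrix_vector_mult_def
  by (simp add: sum_distrib_left mult.assoc)

lemma cycle_from_path:
  fixes E' E :: "'n set set"
  assumes sub: "E' \<subseteq> E" and ij: "i \<noteq> j" "{i,j} \<in> E" "{i,j} \<notin> E'"
    and p: "(\<lambda>a b. {a,b} \<in> E')\<^sup>*\<^sup>* i j"
  shows "has_cycle E"
proof -
  let ?R = "\<lambda>a b. {a,b} \<in> E'"
  obtain xs0 where "rtrancl_path ?R i xs0 j" using p rtranclp_eq_rtrancl_path by metis
  then obtain ys where yp: "rtrancl_path ?R i ys j" and d: "distinct (i # ys)"
    using rtrancl_path_distinct by metis
  have ne: "ys \<noteq> []" using yp ij(1) by (auto elim: rtrancl_path.cases)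
  have lastj: "last ys = j" using rtrancl_path_last[OF yp ne] .
  have "length ys \<noteq> 1"
  proof
    assume "length ys = 1"
    then have "ys = [j]" using lastj by (cases ys) auto
    then have "?R i j" using rtrancl_path_nth[OF yp, of 0] by simp
    then show False using ij by simp
  qed
  moreover have "length ys \<noteq> 0" using ne by simp
  ultimately have len: "length ys \<ge> 2" by linarith
  let ?vs = "i # ys"
  have "is_cycle E ?vs"
    unfolding is_cycle_def
  proof (intro conjI allI impI)
    show "3 \<le> length ?vs" using len by simp
    show "distinct ?vs" by fact
    fix k assume k: "k < length ?vs"
    show "{?vs ! k, ?vs ! ((k + 1) mod length ?vs)} \<in> E"
    proof (cases "k < length ys")
      case True
      then have "(k+1) mod length ?vs = Suc k" by simp
      moreover have "?R (?vs ! k) (ys ! k)" using rtrancl_path_nth[OF yp True] .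
      ultimately show ?thesis using sub by auto
    next
      case False
      then have kk: "k = length ys" using k by simp
      then have "(k+1) mod length ?vs = 0" by simp
      moreover have "?vs ! k = j" using kk lastj ne by (simp add: last_conv_nth)
      ultimately show ?thesis using ij by (simp add: insert_commute)
    qed
  qed
  then show ?thesis unfolding has_cycle_def by blast
qed

lemma threshold_sym:
  assumes "symmetric_matrix A" shows "symmetric_matrix (threshold F A)"
  using assms unfolding symmetric_matrix_def threshold_def
  by (auto simp: vec_eq_iff transpose_def insert_commute)

definition rx :: "real^'n \<Rightarrow> 'n set \<Rightarrow> real^'n" where
  "rx x C = (\<chi> i. if i \<in> C then x$i else 0)"

lemma acyclic_pd:
  fixes E E' :: "'n::finite set set"
  assumes nc: "\<not> has_cycle E" and A: "A \<in> PG E" and sub: "E' \<subseteq> E"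
  shows "pos_def (threshold E' A)"
proof -
  let ?R = "\<lambda>a b. {a,b} \<in> E'"
  let ?S = "?R\<^sup>*\<^sup>*"
  define Comp where "Comp k = {j. ?S k j}" for k
  have symR: "symp ?R" by (auto simp: symp_def insert_commute)
  have symS: "?S a b \<Longrightarrow> ?S b a" for a b using sympD[OF symp_rtranclp[OF symR]] by blast
  have memC: "i \<in> Comp k \<longleftrightarrow> Comp k = Comp i" for i k
  proof
    assume "i \<in> Comp k"
    then have "?S k i" by (simp add: Comp_def)
    then show "Comp k = Comp i" unfolding Comp_def
      using symS by (auto intro: rtranclp_trans)
  next
    assume "Comp k = Comp i" then show "i \<in> Comp k" by (simp add: Comp_def)
  qed
  have pdA: "pos_def A" and zA: "\<And>i j. i \<noteq> j \<Longrightarrow> {i,j} \<notin> E \<Longrightarrow> A$i$j = 0"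
    using A by (auto simp: PG_def)
  have ent: "threshold E' A $ i $ j = (if ?S i j then A$i$j else 0)" for i j
  proof (cases "i = j")
    case True then show ?thesis by (simp add: threshold_def)
  next
    case False
    show ?thesis
    proof (cases "{i,j} \<in> E'")
      case True then show ?thesis by (auto simp: threshold_def)
    next
      case nE: False
      show ?thesis
      proof (cases "{i,j} \<in> E")
        case True
        then have "\<not> ?S i j" using cycle_from_path[OF sub False True nE] nc by blast
        then show ?thesis using nE False by (simp add: threshold_def)
      next
        case f2: False then show ?thesis using zA[OF False f2] by (simp add: threshold_def)
      qed
    qed
  qed
  let ?Cl = "range Comp"
  have decomp: "qf (threshold E' A) x = (\<Sum>C\<in>?Cl. qf A (rx x C))" for x
  proof -
    have "(\<Sum>C\<in>?Cl. qf A (rx x C)) =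
      (\<Sum>C\<in>?Cl. \<Sum>i\<in>UNIV. \<Sum>j\<in>UNIV. (if i \<in> C \<and> j \<in> C then x$i * A$i$j * x$j else 0))"
      unfolding qf_def rx_def by (intro sum.cong refl) auto
    also have "\<dots> = (\<Sum>i\<in>UNIV. \<Sum>C\<in>?Cl. \<Sum>j\<in>UNIV. (if i \<in> C \<and> j \<in> C then x$i * A$i$j * x$j else 0))"
      by (rule sum.swap)
    also have "\<dots> = (\<Sum>i\<in>UNIV. \<Sum>j\<in>UNIV. \<Sum>C\<in>?Cl. (if i \<in> C \<and> j \<in> C then x$i * A$i$j * x$j else 0))"
      by (intro sum.cong refl sum.swap)
    also have "\<dots> = (\<Sum>i\<in>UNIV. \<Sum>j\<in>UNIV. \<Sum>C\<in>?Cl. (if C = Comp i then (if j \<in> C then x$i * A$i$j * x$j else 0) else 0))"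
      by (intro sum.cong refl) (use memC in auto)
    also have "\<dots> = (\<Sum>i\<in>UNIV. \<Sum>j\<in>UNIV. (if j \<in> Comp i then x$i * A$i$j * x$j else 0))"
      by (simp add: sum.delta)
    also have "\<dots> = qf (threshold E' A) x"
      unfolding qf_def ent Comp_def by (intro sum.cong refl) auto
    finally show ?thesis by simp
  qed
  have nn: "qf A y \<ge> 0" for y
    using pdA unfolding pos_def_def quad_qf[symmetric]
    by (cases "y = 0") (auto intro: less_imp_le)
  show ?thesis
    unfolding pos_def_def
  proof (intro conjI allI impI)
    show "symmetric_matrix (threshold E' A)"
      using pdA threshold_sym by (auto simp: pos_def_def)
    fix x :: "real^'n" assume "x \<noteq> 0"
    then obtain i where xi: "x$i \<noteq> 0" by (auto simp: vec_eq_iff)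
    have "i \<in> Comp i" by (simp add: Comp_def)
    then have "rx x (Comp i) \<noteq> 0" using xi by (auto simp: vec_eq_iff rx_def)
    then have pos: "qf A (rx x (Comp i)) > 0"
      using pdA unfolding pos_def_def quad_qf by blast
    have "0 < (\<Sum>C\<in>?Cl. qf A (rx x C))"
      by (rule sum_pos2[where i="Comp i"]) (use pos nn in auto)
    then show "0 < x \<bullet> (threshold E' A *v x)" by (simp add: quad_qf decomp)
  qed
qed


definition dl :: "'n \<Rightarrow> real^'n" where "dl a = (\<chi> i. if i = a then 1 else 0)"

definition CM :: "real \<Rightarrow> real \<Rightarrow> nat \<Rightarrow> 'n list \<Rightarrow> real \<Rightarrow> real^'n^'n" where
"CM \<epsilon> c m vs \<beta> = (\<chi> i j. \<epsilon> * (if i = j then 1 else 0)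
   + (\<Sum>l<m. (dl (vs!l) - dl (vs!Suc l))$i * (dl (vs!l) - dl (vs!Suc l))$j)
   - c * (dl (vs!0)$i * dl (vs!0)$j + dl (vs!m)$i * dl (vs!m)$j)
   + \<beta> * (dl (vs!0)$i * dl (vs!m)$j + dl (vs!m)$i * dl (vs!0)$j))"

lemma bil: "(\<Sum>i\<in>UNIV. \<Sum>j\<in>UNIV. x$i * (a$i * b$j) * x$j) = (\<Sum>i\<in>UNIV. x$i * a$i) * (\<Sum>j\<in>UNIV. x$j * (b$j::real))"
  by (simp add: sum_product mult_ac)

lemma sdl: "(\<Sum>i\<in>UNIV. x$i * dl p $ i) = (x$p :: real)"
  by (simp add: dl_def if_distrib cong: if_cong)

lemma sdl2: "(\<Sum>i\<in>UNIV. x$i * (dl p - dl q) $ i) = (x$p - x$q :: real)"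
  by (simp add: right_diff_distrib sum_subtractf sdl)

lemma sdiag: "(\<Sum>i\<in>UNIV. \<Sum>j\<in>UNIV. x$i * (if i = j then 1 else 0) * x$j) = (\<Sum>i\<in>UNIV. (x$i::real)^2)"
proof -
  have eq: "x$i * (if i=j then 1 else 0) * x$j = (if i=j then x$i*x$i else 0)" for i j by simp
  show ?thesis by (simp add: eq power2_eq_square)
qed

lemma qf_CM:
  "qf (CM \<epsilon> c m vs \<beta>) (x::real^'n::finite) = \<epsilon> * (\<Sum>i\<in>UNIV. x$i^2) + (\<Sum>l<m. (x$(vs!l) - x$(vs!Suc l))^2)
     - c * (x$(vs!0)^2 + x$(vs!m)^2) + 2 * \<beta> * x$(vs!0) * x$(vs!m)"
proof -
  define u where "u l = dl (vs!l) - dl (vs!Suc l)" for l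
  define a where "a = dl (vs!0)"
  define b where "b = dl (vs!m)"
  have "qf (CM \<epsilon> c m vs \<beta>) x = (\<Sum>i\<in>UNIV. \<Sum>j\<in>UNIV.
        \<epsilon> * (x$i * (if i = j then 1 else 0) * x$j)
      + (\<Sum>l<m. x$i * ((u l)$i * (u l)$j) * x$j)
      - c * (x$i * (a$i * a$j) * x$j + x$i * (b$i * b$j) * x$j)
      + \<beta> * (x$i * (a$i * b$j) * x$j + x$i * (b$i * a$j) * x$j))"
    unfolding qf_def CM_def u_def a_def b_def
    by (intro sum.cong refl) (simp add: algebra_simps sum_distrib_left sum_distrib_right)
  also have "\<dots> = \<epsilon> * (\<Sum>i\<in>UNIV. \<Sum>j\<in>UNIV. x$i * (if i = j then 1 else 0) * x$j)
      + (\<Sum>i\<in>UNIV. \<Sum>j\<in>UNIV. \<Sum>l<m. x$i * ((u l)$i * (u l)$j) * x$j)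
      - c * ((\<Sum>i\<in>UNIV. \<Sum>j\<in>UNIV. x$i * (a$i * a$j) * x$j) + (\<Sum>i\<in>UNIV. \<Sum>j\<in>UNIV. x$i * (b$i * b$j) * x$j))
      + \<beta> * ((\<Sum>i\<in>UNIV. \<Sum>j\<in>UNIV. x$i * (a$i * b$j) * x$j) + (\<Sum>i\<in>UNIV. \<Sum>j\<in>UNIV. x$i * (b$i * a$j) * x$j))"
    by (simp only: sum.distrib sum_subtractf flip: sum_distrib_left)
  also have "(\<Sum>i\<in>UNIV. \<Sum>j\<in>UNIV. \<Sum>l<m. x$i * ((u l)$i * (u l)$j) * x$j)
     = (\<Sum>l<m. \<Sum>i\<in>UNIV. \<Sum>j\<in>UNIV. x$i * ((u l)$i * (u l)$j) * x$j)"
    by (subst sum.swap) (intro sum.cong refl sum.swap)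
  finally show ?thesis
    unfolding bil sdiag u_def a_def b_def sdl sdl2
    by (simp add: power2_eq_square algebra_simps)
qed

lemma dl_nth: "dl a $ i = (if i = a then 1 else 0)" by (simp add: dl_def)

lemma supp_u: "p \<noteq> q \<Longrightarrow> i \<noteq> j \<Longrightarrow> (dl p - dl q)$i * (dl p - dl q)$j \<noteq> (0::real) \<Longrightarrow> {i,j} = {p,q}"
  by (auto simp: dl_nth split: if_splits)

lemma supp_b: "(dl a $ i * dl b $ j + dl b $ i * dl a $ j) \<noteq> (0::real) \<Longrightarrow> {i,j} = {a,b}"
  by (auto simp: dl_nth split: if_splits)

lemma supp_d: "i \<noteq> j \<Longrightarrow> dl a $ i * dl a $ j = (0::real)"
  by (auto simp: dl_nth)

lemma cycle_not_pd:
  fixes E :: "'n::finite set set"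
  assumes cyc: "is_cycle E vs"
  shows "\<exists>A\<in>PG E. \<exists>E'\<subseteq>E. \<not> pos_def (threshold E' A)"
proof -
  define k where "k = length vs"
  define m where "m = k - 1"
  define v where "v = (\<lambda>l. vs ! l)"
  define \<epsilon> :: real where "\<epsilon> = 1 / (real k * real k)"
  define c :: real where "c = 1 / real m"
  have k3: "k \<ge> 3" and dist: "distinct vs"
    and edges: "\<And>l. l < k \<Longrightarrow> {vs ! l, vs ! ((l + 1) mod k)} \<in> E"
    using cyc unfolding is_cycle_def k_def by auto
  have m2: "m \<ge> 2" and km: "k = Suc m" using k3 by (auto simp: m_def)
  have vinj: "\<And>i j. i \<le> m \<Longrightarrow> j \<le> m \<Longrightarrow> v i = v j \<longleftrightarrow> i = j"
    unfolding v_def using dist km k_def by (simp add: nth_eq_iff_index_eq)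
  have pedge: "l < m \<Longrightarrow> {v l, v (Suc l)} \<in> E" for l
    using edges[of l] km unfolding v_def by auto
  have cedge: "{v 0, v m} \<in> E"
    using edges[of m] km unfolding v_def by (auto simp: insert_commute)
  have pne: "l < m \<Longrightarrow> {v l, v (Suc l)} \<noteq> {v 0, v m}" for l
  proof
    assume l: "l < m" and eq: "{v l, v (Suc l)} = {v 0, v m}"
    then have "(v l = v 0 \<and> v (Suc l) = v m) \<or> (v l = v m \<and> v (Suc l) = v 0)"
      by (auto simp: doubleton_eq_iff)
    then show False
    proof
      assume "v l = v 0 \<and> v (Suc l) = v m"
      then have "l = 0" "Suc l = m" using vinj[of l 0] vinj[of "Suc l" m] l by auto
      then show False using m2 by simp
    next
      assume "v l = v m \<and> v (Suc l) = v 0"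
      then have "l = m" using vinj[of l m] l by auto
      then show False using l by simp
    qed
  qed
  have v0m: "v 0 \<noteq> v m" using vinj[of 0 m] m2 by simp
  have vl: "l < m \<Longrightarrow> v l \<noteq> v (Suc l)" for l using vinj[of l "Suc l"] by simp
  define A where "A = CM \<epsilon> c m vs c"
  define T where "T = CM \<epsilon> c m vs 0"
  define E' where "E' = E - {{v 0, v m}}"
  have ent: "CM \<epsilon> c m vs \<beta> $ i $ j = (\<Sum>l<m. (dl (v l) - dl (v (Suc l)))$i * (dl (v l) - dl (v (Suc l)))$j)
      + \<beta> * (dl (v 0)$i * dl (v m)$j + dl (v m)$i * dl (v 0)$j)" if "i \<noteq> j" for i j \<beta>
    using that unfolding CM_def v_def by (simp add: supp_d)
  have usum0: "(\<Sum>l<m. (dl (v l) - dl (v (Suc l)))$i * (dl (v l) - dl (v (Suc l)))$j) = 0"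
    if "i \<noteq> j" "\<And>l. l < m \<Longrightarrow> {i,j} \<noteq> {v l, v (Suc l)}" for i j
    using supp_u[OF vl _] that by (intro sum.neutral) blast
  have eps: "\<epsilon> > 0" using k3 by (simp add: \<epsilon>_def)
  have qA: "qf A x = \<epsilon> * (\<Sum>i\<in>UNIV. x$i^2) + ((\<Sum>l<m. (x$(v l) - x$(v (Suc l)))^2) - c * (x$(v 0) - x$(v m))^2)" for x
    unfolding A_def qf_CM v_def by (simp add: power2_eq_square algebra_simps)
  have cs: "c * (x$(v 0) - x$(v m))^2 \<le> (\<Sum>l<m. (x$(v l) - x$(v (Suc l)))^2)" for x :: "real^'n"
  proof -
    have "(x$(v 0) - x$(v m))^2 = (\<Sum>l<m. x$(v l) - x$(v (Suc l)))^2"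
      using sum_lessThan_telescope'[of "\<lambda>l. x$(v l)" m] by simp
    also have "\<dots> \<le> (\<Sum>l<m. (x$(v l) - x$(v (Suc l)))^2) * real m"
      using sum_squared_le_sum_of_squares[of "\<lambda>l. x$(v l) - x$(v (Suc l))" "{..<m}"] by simp
    finally show ?thesis using m2 unfolding c_def by (simp add: divide_simps mult.commute)
  qed
  have pdA: "pos_def A"
    unfolding pos_def_def
  proof (intro conjI allI impI)
    show "symmetric_matrix A"
      unfolding symmetric_matrix_def A_def CM_def by (simp add: vec_eq_iff transpose_def mult.commute add.commute)
    fix x :: "real^'n" assume "x \<noteq> 0"
    then obtain i where xi: "x$i \<noteq> 0" by (auto simp: vec_eq_iff)
    have "0 < (\<Sum>i\<in>UNIV. x$i^2)" by (rule sum_pos2[where i=i]) (use xi in auto)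
    then have "0 < \<epsilon> * (\<Sum>i\<in>UNIV. x$i^2)" using eps by simp
    then show "0 < x \<bullet> (A *v x)" unfolding quad_qf qA using cs[of x] by linarith
  qed
  have AinPG: "A \<in> PG E"
    unfolding PG_def
  proof (intro CollectI conjI allI impI pdA)
    fix i j assume ij: "i \<noteq> j \<and> {i, j} \<notin> E"
    have "{i,j} \<noteq> {v 0, v m}" using ij cedge by auto
    then have "dl (v 0)$i * dl (v m)$j + dl (v m)$i * dl (v 0)$j = 0" using supp_b by blast
    moreover have "(\<Sum>l<m. (dl (v l) - dl (v (Suc l)))$i * (dl (v l) - dl (v (Suc l)))$j) = 0"
      using ij pedge by (intro usum0) auto
    ultimately show "A $ i $ j = 0" unfolding A_def using ent ij by simp
  qed
  have thr: "threshold E' A = T"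
  proof -
    have "threshold E' A $ i $ j = T $ i $ j" for i j
    proof (cases "i = j")
      case True
      then show ?thesis unfolding threshold_def A_def T_def CM_def using v0m
        by (simp add: dl_nth v_def)
    next
      case ij: False
      show ?thesis
      proof (cases "{i,j} \<in> E'")
        case True
        then have "{i,j} \<noteq> {v 0, v m}" by (simp add: E'_def)
        then have "dl (v 0)$i * dl (v m)$j + dl (v m)$i * dl (v 0)$j = 0" using supp_b by blast
        then show ?thesis using True ij unfolding threshold_def A_def T_def by (simp add: ent)
      next
        case False
        have "(\<Sum>l<m. (dl (v l) - dl (v (Suc l)))$i * (dl (v l) - dl (v (Suc l)))$j) = 0"
        proof (rule usum0[OF ij])
          fix l assume l: "l < m"
          show "{i, j} \<noteq> {v l, v (Suc l)}"
          proof
            assume eq: "{i, j} = {v l, v (Suc l)}"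
            then have "{i,j} \<in> E" using pedge l by simp
            then have "{i,j} = {v 0, v m}" using False by (simp add: E'_def)
            then show False using pne[OF l] eq by simp
          qed
        qed
        then show ?thesis using False ij unfolding threshold_def A_def T_def by (simp add: ent)
      qed
    qed
    then show ?thesis by (simp add: vec_eq_iff)
  qed
  define x :: "real^'n" where "x = (\<chi> i. if i \<in> set vs then 1 else 0)"
  have xv: "l \<le> m \<Longrightarrow> x $ v l = 1" for l using km unfolding x_def v_def k_def by simp
  have sx: "(\<Sum>i\<in>UNIV. x$i^2) = real k"
  proof -
    have "(\<Sum>i\<in>UNIV. x$i^2) = (\<Sum>i\<in>UNIV. if i \<in> set vs then 1 else 0)"
      unfolding x_def by (intro sum.cong refl) auto
    also have "\<dots> = real (card (set vs))" by (simp add: sum.If_cases)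
    finally show ?thesis using dist distinct_card k_def by metis
  qed
  have "qf T x = \<epsilon> * real k - c * 2"
    unfolding T_def qf_CM sx using xv
    by (simp add: v_def[symmetric])
  also have "\<dots> < 0"
  proof -
    have "\<epsilon> * real k = 1 / real k" using k3 unfolding \<epsilon>_def by simp
    moreover have "1 / real k < 2 / real m" using km m2 by (simp add: divide_simps)
    ultimately show ?thesis unfolding c_def by simp
  qed
  finally have neg: "x \<bullet> (T *v x) < 0" by (simp add: quad_qf)
  have "x \<noteq> 0" using xv[of 0] by auto
  then have "\<not> pos_def T" using neg unfolding pos_def_def by force
  moreover have "E' \<subseteq> E" by (auto simp: E'_def)
  ultimately show ?thesis using AinPG thr by blast
qed


theorem corollary5:
  fixes E :: "'n::finite set set"
  assumes "undirected_graph E"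
  shows "(\<forall>A \<in> PG E. \<forall>E' \<subseteq> E. pos_def (threshold E' A)) \<longleftrightarrow> \<not> has_cycle E"
proof
  assume h: "\<forall>A \<in> PG E. \<forall>E' \<subseteq> E. pos_def (threshold E' A)"
  show "\<not> has_cycle E"
  proof
    assume "has_cycle E"
    then obtain vs where "is_cycle E vs" by (auto simp: has_cycle_def)
    then show False using cycle_not_pd h by blast
  qed
next
  assume "\<not> has_cycle E"
  then show "\<forall>A \<in> PG E. \<forall>E' \<subseteq> E. pos_def (threshold E' A)" using acyclic_pd by blast
qed

end
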